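(* Let $(M,g)$ be a 4-dimensional Lorentzian (CQR)$_4$ manifold with fundamental vector $A$, and at a point where $C_{jklm}\neq0$ and $A\ne 0$ let $\lambda$ be the scalar with $A^iR_{im}=\lambda A_m$. Then $$A^mA^jR_{jklm}=\Big(\lambda-\frac{R}{6}\Big)A_kA_l,$$ and consequently $A_pR_{kjlm}A^mA^j-A_kR_{pjlm}A^mA^j=0$.
   Context: $(M,g)$ is a connected Hausdorff Lorentzian manifold with Levi-Civita connection $\nabla$; indices raised/lowered with $g$, repeated indices summed. $R_{jklm}$ is the Riemann tensor, $R_{kl}=-R_{mkl}{}^m$, $R=R^m{}_m$, and the Weyl tensor (with $n=4$) is $$C_{jklm}=R_{jklm}+\tfrac{1}{n-2}\big(g_{mj}R_{kl}-g_{mk}R_{jl}+R_{mj}g_{kl}-R_{mk}g_{jl}\big)-\tfrac{R}{(n-1)(n-2)}\big(g_{mj}g_{kl}-g_{mk}g_{jl}\big).$$ (CQR)$_n$: $C_{jklm}\not\equiv 0$ and there is a non-zero vector field $A_i$ (fundamental vector) with $$\nabla_i C_{jklm}=2A_iC_{jklm}+A_jC_{iklm}+A_kC_{jilm}+A_lC_{jkim}+A_mC_{jkli}.$$ (For such manifolds $A$ is null, $A^mC_{jklm}=0$, and $A$ is an eigenvector of the Ricci tensor wherever $C\neq0$.) *)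

theory Defs
  imports "HOL-Analysis.Analysis"
begin

text \<open>Local-coordinate model of a 4-dimensional Lorentzian manifold: an open connected
  set U of R^4 (points of type real^4), with coordinate indices of the finite type 4.
  Tensor fields are given by their components in these coordinates (all indices down).\<close>

type_synonym pt = "real^4"
type_synonym idx = 4

definition pd :: "idx \<Rightarrow> (pt \<Rightarrow> real) \<Rightarrow> pt \<Rightarrow> real" where
  "pd i f p = frechet_derivative f (at p) (axis i 1)"

fun pds :: "idx list \<Rightarrow> (pt \<Rightarrow> real) \<Rightarrow> pt \<Rightarrow> real" where
  "pds [] f = f"
| "pds (i # is) f = pd i (pds is f)"

definition smooth_fun_on :: "pt set \<Rightarrow> (pt \<Rightarrow> real) \<Rightarrow> bool" where
  "smooth_fun_on U f \<longleftrightarrow> (\<forall>is. pds is f differentiable_on U)"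

definition gmat :: "(pt \<Rightarrow> idx \<Rightarrow> idx \<Rightarrow> real) \<Rightarrow> pt \<Rightarrow> real^4^4" where
  "gmat g p = (\<chi> i j. g p i j)"

text \<open>Lorentzian signature (-,+,+,+), via Sylvester's law: symmetric and congruent to diag(-1,1,1,1).\<close>
definition lorentzian_matrix :: "real^4^4 \<Rightarrow> bool" where
  "lorentzian_matrix G \<longleftrightarrow> transpose G = G \<and>
     (\<exists>P::real^4^4. invertible P \<and>
        transpose P ** G ** P = (\<chi> i j. if i = j then (if i = 0 then -1 else 1) else 0))"

definition lorentzian_metric_on :: "pt set \<Rightarrow> (pt \<Rightarrow> idx \<Rightarrow> idx \<Rightarrow> real) \<Rightarrow> bool" where
  "lorentzian_metric_on U g \<longleftrightarrow>
     (\<forall>i j. smooth_fun_on U (\<lambda>p. g p i j)) \<and> (\<forall>p\<in>U. lorentzian_matrix (gmat g p))"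

definition ginv :: "(pt \<Rightarrow> idx \<Rightarrow> idx \<Rightarrow> real) \<Rightarrow> pt \<Rightarrow> idx \<Rightarrow> idx \<Rightarrow> real" where
  "ginv g p i j = matrix_inv (gmat g p) $ i $ j"

definition christoffel :: "(pt \<Rightarrow> idx \<Rightarrow> idx \<Rightarrow> real) \<Rightarrow> pt \<Rightarrow> idx \<Rightarrow> idx \<Rightarrow> idx \<Rightarrow> real" where
  "christoffel g p k i j = (1/2) * (\<Sum>l\<in>UNIV. ginv g p k l *
      (pd i (\<lambda>q. g q j l) p + pd j (\<lambda>q. g q i l) p - pd l (\<lambda>q. g q i j) p))"

text \<open>Curvature endomorphism components Rup a b c d = (R(d_c,d_d) d_b)^a,
  with R(X,Y) = nabla_X nabla_Y - nabla_Y nabla_X - nabla_[X,Y].\<close>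
definition Rup :: "(pt \<Rightarrow> idx \<Rightarrow> idx \<Rightarrow> real) \<Rightarrow> pt \<Rightarrow> idx \<Rightarrow> idx \<Rightarrow> idx \<Rightarrow> idx \<Rightarrow> real" where
  "Rup g p a b c d =
     pd c (\<lambda>q. christoffel g q a d b) p - pd d (\<lambda>q. christoffel g q a c b) p
     + (\<Sum>e\<in>UNIV. christoffel g p a c e * christoffel g p e d b
                 - christoffel g p a d e * christoffel g p e c b)"

text \<open>Riemann tensor R_{jklm} = g(R(d_j,d_k) d_m, d_l), so that R_{kl} = - R_{mkl}^m is the Ricci tensor.\<close>
definition Riem :: "(pt \<Rightarrow> idx \<Rightarrow> idx \<Rightarrow> real) \<Rightarrow> pt \<Rightarrow> idx \<Rightarrow> idx \<Rightarrow> idx \<Rightarrow> idx \<Rightarrow> real" where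
  "Riem g p j k l m = (\<Sum>a\<in>UNIV. g p l a * Rup g p a m j k)"

definition Ric :: "(pt \<Rightarrow> idx \<Rightarrow> idx \<Rightarrow> real) \<Rightarrow> pt \<Rightarrow> idx \<Rightarrow> idx \<Rightarrow> real" where
  "Ric g p k l = - (\<Sum>m\<in>UNIV. \<Sum>q\<in>UNIV. ginv g p m q * Riem g p m k l q)"

definition scal :: "(pt \<Rightarrow> idx \<Rightarrow> idx \<Rightarrow> real) \<Rightarrow> pt \<Rightarrow> real" where
  "scal g p = (\<Sum>k\<in>UNIV. \<Sum>l\<in>UNIV. ginv g p k l * Ric g p k l)"

definition Weyl :: "(pt \<Rightarrow> idx \<Rightarrow> idx \<Rightarrow> real) \<Rightarrow> pt \<Rightarrow> idx \<Rightarrow> idx \<Rightarrow> idx \<Rightarrow> idx \<Rightarrow> real" where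
  "Weyl g p j k l m = Riem g p j k l m
     + (1 / (4 - 2)) * (g p m j * Ric g p k l - g p m k * Ric g p j l
                        + Ric g p m j * g p k l - Ric g p m k * g p j l)
     - scal g p / ((4 - 1) * (4 - 2)) * (g p m j * g p k l - g p m k * g p j l)"

definition cov4 :: "(pt \<Rightarrow> idx \<Rightarrow> idx \<Rightarrow> real) \<Rightarrow> (pt \<Rightarrow> idx \<Rightarrow> idx \<Rightarrow> idx \<Rightarrow> idx \<Rightarrow> real)
      \<Rightarrow> pt \<Rightarrow> idx \<Rightarrow> idx \<Rightarrow> idx \<Rightarrow> idx \<Rightarrow> idx \<Rightarrow> real" where
  "cov4 g T p i j k l m = pd i (\<lambda>q. T q j k l m) p
     - (\<Sum>a\<in>UNIV. christoffel g p a i j * T p a k l m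
                 + christoffel g p a i k * T p j a l m
                 + christoffel g p a i l * T p j k a m
                 + christoffel g p a i m * T p j k l a)"

definition CQR4 :: "pt set \<Rightarrow> (pt \<Rightarrow> idx \<Rightarrow> idx \<Rightarrow> real) \<Rightarrow> (pt \<Rightarrow> idx \<Rightarrow> real) \<Rightarrow> bool" where
  "CQR4 U g A \<longleftrightarrow>
     (\<exists>p\<in>U. \<exists>j k l m. Weyl g p j k l m \<noteq> 0) \<and>
     (\<exists>p\<in>U. \<exists>i. A p i \<noteq> 0) \<and>
     (\<forall>p\<in>U. \<forall>i j k l m. cov4 g (Weyl g) p i j k l m =
        2 * A p i * Weyl g p j k l m + A p j * Weyl g p i k l m + A p k * Weyl g p j i l m
        + A p l * Weyl g p j k i m + A p m * Weyl g p j k l i)"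

definition raise :: "(pt \<Rightarrow> idx \<Rightarrow> idx \<Rightarrow> real) \<Rightarrow> (pt \<Rightarrow> idx \<Rightarrow> real) \<Rightarrow> pt \<Rightarrow> idx \<Rightarrow> real" where
  "raise g A p i = (\<Sum>j\<in>UNIV. ginv g p i j * A p j)"

end

theory Submission
  imports Defs
begin

lemma lor_inv:
  assumes "lorentzian_matrix G"
  shows "G ** matrix_inv G = mat 1" "transpose G = G"
proof -
  obtain P :: "real^4^4" where P: "invertible P"
    "transpose P ** G ** P = (\<chi> i j. if i = j then (if i = 0 then -1 else 1) else 0)"
    using assms unfolding lorentzian_matrix_def by blast
  let ?D = "(\<chi> i j. if i = j then (if i = 0 then -1 else 1) else 0) :: real^4^4"
  have "det ?D = (\<Prod>i\<in>UNIV. ?D $ i $ i)"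
    by (rule det_diagonal) simp
  also have "\<dots> \<noteq> 0" by (simp add: prod_zero_iff)
  finally have "det ?D \<noteq> 0" .
  then have "det (transpose P ** G ** P) \<noteq> 0" using P(2) by simp
  then have "det G \<noteq> 0" by (simp add: det_mul)
  then have "invertible G" by (simp add: invertible_det_nz)
  then show "G ** matrix_inv G = mat 1"
    unfolding invertible_def matrix_inv_def by (rule someI_ex[THEN conjunct1])
  show "transpose G = G" using assms unfolding lorentzian_matrix_def by blast
qed

lemma Riem_anti: "Riem g p k j l m = - Riem g p j k l m"
proof -
  have "Rup g p a m k j = - Rup g p a m j k" for a
  proof -
    have "(\<Sum>e\<in>UNIV. christoffel g p a k e * christoffel g p e j m
                 - christoffel g p a j e * christoffel g p e k m)
        = - (\<Sum>e\<in>UNIV. christoffel g p a j e * christoffel g p e k m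
                 - christoffel g p a k e * christoffel g p e j m)"
      by (simp add: sum_negf[symmetric])
    then show ?thesis unfolding Rup_def by simp
  qed
  then show ?thesis unfolding Riem_def by (simp add: sum_negf[symmetric])
qed

theorem mainTheorem16:
  fixes U :: "(real^4) set" and g :: "real^4 \<Rightarrow> 4 \<Rightarrow> 4 \<Rightarrow> real"
    and A :: "real^4 \<Rightarrow> 4 \<Rightarrow> real" and p :: "real^4" and lam :: real
  assumes U: "open U" "connected U"
    and metric: "lorentzian_metric_on U g"
    and cqr: "CQR4 U g A"
    and null: "\<forall>q\<in>U. (\<Sum>i\<in>UNIV. raise g A q i * A q i) = 0"
    and annih: "\<forall>q\<in>U. \<forall>j k l. (\<Sum>m\<in>UNIV. raise g A q m * Weyl g q j k l m) = 0"
    and pU: "p \<in> U"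
    and Cp: "\<exists>j k l m. Weyl g p j k l m \<noteq> 0"
    and Ap: "\<exists>i. A p i \<noteq> 0"
    and eig: "\<forall>m. (\<Sum>i\<in>UNIV. raise g A p i * Ric g p i m) = lam * A p m"
  shows "(\<forall>k l. (\<Sum>m\<in>UNIV. \<Sum>j\<in>UNIV. raise g A p m * raise g A p j * Riem g p j k l m)
              = (lam - scal g p / 6) * A p k * A p l)
       \<and> (\<forall>q k l. A p q * (\<Sum>m\<in>UNIV. \<Sum>j\<in>UNIV. Riem g p k j l m * raise g A p m * raise g A p j)
                 - A p k * (\<Sum>m\<in>UNIV. \<Sum>j\<in>UNIV. Riem g p q j l m * raise g A p m * raise g A p j) = 0)"
proof -
  define a where "a = raise g A p"
  define G where "G = gmat g p"
  have lm: "lorentzian_matrix G" using metric pU unfolding lorentzian_metric_on_def G_def by blast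
  have inv: "G ** matrix_inv G = mat 1" and sym: "transpose G = G" using lor_inv[OF lm] by auto
  have gsym: "g p i j = g p j i" for i j
    using sym unfolding G_def gmat_def transpose_def by (metis (no_types, lifting) vec_lambda_beta vec_eq_iff)
  have id: "(\<Sum>m\<in>UNIV. g p k m * ginv g p m j) = (if k = j then 1 else 0)" for k j
  proof -
    have "(G ** matrix_inv G) $ k $ j = (if k = j then 1 else 0)" using inv by (simp add: mat_def)
    then show ?thesis unfolding ginv_def G_def matrix_matrix_mult_def gmat_def by simp
  qed
  have L1: "(\<Sum>m\<in>UNIV. a m * g p m k) = A p k" for k
  proof -
    have "(\<Sum>m\<in>UNIV. a m * g p m k) = (\<Sum>m\<in>UNIV. \<Sum>j\<in>UNIV. g p k m * ginv g p m j * A p j)"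
      unfolding a_def raise_def by (simp add: sum_distrib_left sum_distrib_right gsym[of _ k] mult_ac)
    also have "\<dots> = (\<Sum>j\<in>UNIV. (\<Sum>m\<in>UNIV. g p k m * ginv g p m j) * A p j)"
      by (subst sum.swap) (simp add: sum_distrib_right)
    also have "\<dots> = A p k" by (simp add: id if_distrib[of "\<lambda>x. x * A p _"] cong: if_cong)
    finally show ?thesis .
  qed
  have L2: "(\<Sum>j\<in>UNIV. g p m j * a j) = A p m" for m
    using L1[of m] by (simp add: gsym mult.commute)
  have nl: "(\<Sum>m\<in>UNIV. a m * A p m) = 0" using null pU unfolding a_def by blast
  have ev: "(\<Sum>i\<in>UNIV. a i * Ric g p i m) = lam * A p m" for m using eig unfolding a_def by blast
  have part1: "(\<Sum>m\<in>UNIV. \<Sum>j\<in>UNIV. a m * a j * Riem g p j k l m)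
              = (lam - scal g p / 6) * A p k * A p l" for k l
  proof -
    let ?s = "scal g p"
    have z: "(\<Sum>m\<in>UNIV. \<Sum>j\<in>UNIV. a m * a j * Weyl g p j k l m) = 0"
    proof -
      have "(\<Sum>m\<in>UNIV. \<Sum>j\<in>UNIV. a m * a j * Weyl g p j k l m)
          = (\<Sum>j\<in>UNIV. a j * (\<Sum>m\<in>UNIV. a m * Weyl g p j k l m))"
        by (subst sum.swap) (simp add: sum_distrib_left mult_ac)
      also have "\<dots> = 0" using annih pU unfolding a_def by simp
      finally show ?thesis .
    qed
    have t1: "(\<Sum>m\<in>UNIV. \<Sum>j\<in>UNIV. a m * a j * (g p m j * Ric g p k l)) = 0"
    proof -
      have "(\<Sum>m\<in>UNIV. \<Sum>j\<in>UNIV. a m * a j * (g p m j * Ric g p k l))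
          = Ric g p k l * (\<Sum>m\<in>UNIV. a m * (\<Sum>j\<in>UNIV. g p m j * a j))"
        by (simp add: sum_distrib_left mult_ac)
      then show ?thesis by (simp add: L2 nl)
    qed
    have t2: "(\<Sum>m\<in>UNIV. \<Sum>j\<in>UNIV. a m * a j * (g p m k * Ric g p j l)) = A p k * (lam * A p l)"
    proof -
      have "(\<Sum>m\<in>UNIV. \<Sum>j\<in>UNIV. a m * a j * (g p m k * Ric g p j l))
          = (\<Sum>m\<in>UNIV. a m * g p m k) * (\<Sum>j\<in>UNIV. a j * Ric g p j l)"
        by ((simp add: sum_product mult_ac; fail) | (subst sum.swap, simp add: sum_product mult_ac))
      then show ?thesis by (simp add: L1 ev)
    qed
    have t3: "(\<Sum>m\<in>UNIV. \<Sum>j\<in>UNIV. a m * a j * (Ric g p m j * g p k l)) = 0"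
    proof -
      have "(\<Sum>m\<in>UNIV. \<Sum>j\<in>UNIV. a m * a j * (Ric g p m j * g p k l))
          = g p k l * (\<Sum>j\<in>UNIV. a j * (\<Sum>m\<in>UNIV. a m * Ric g p m j))"
        by (subst sum.swap) (simp add: sum_distrib_left mult_ac)
      moreover have "(\<Sum>j\<in>UNIV. a j * (lam * A p j)) = lam * (\<Sum>j\<in>UNIV. a j * A p j)" by (simp add: sum_distrib_left mult_ac)
      ultimately show ?thesis by (simp add: ev nl)
    qed
    have t4: "(\<Sum>m\<in>UNIV. \<Sum>j\<in>UNIV. a m * a j * (Ric g p m k * g p j l)) = lam * A p k * A p l"
    proof -
      have "(\<Sum>m\<in>UNIV. \<Sum>j\<in>UNIV. a m * a j * (Ric g p m k * g p j l))
          = (\<Sum>m\<in>UNIV. a m * Ric g p m k) * (\<Sum>j\<in>UNIV. a j * g p j l)"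
        by ((simp add: sum_product mult_ac; fail) | (subst sum.swap, simp add: sum_product mult_ac))
      then show ?thesis by (simp add: L1 ev)
    qed
    have t5: "(\<Sum>m\<in>UNIV. \<Sum>j\<in>UNIV. a m * a j * (g p m j * g p k l)) = 0"
    proof -
      have "(\<Sum>m\<in>UNIV. \<Sum>j\<in>UNIV. a m * a j * (g p m j * g p k l))
          = g p k l * (\<Sum>m\<in>UNIV. a m * (\<Sum>j\<in>UNIV. g p m j * a j))"
        by (simp add: sum_distrib_left mult_ac)
      then show ?thesis by (simp add: L2 nl)
    qed
    have t6: "(\<Sum>m\<in>UNIV. \<Sum>j\<in>UNIV. a m * a j * (g p m k * g p j l)) = A p k * A p l"
    proof -
      have "(\<Sum>m\<in>UNIV. \<Sum>j\<in>UNIV. a m * a j * (g p m k * g p j l))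
          = (\<Sum>m\<in>UNIV. a m * g p m k) * (\<Sum>j\<in>UNIV. a j * g p j l)"
        by ((simp add: sum_product mult_ac; fail) | (subst sum.swap, simp add: sum_product mult_ac))
      then show ?thesis by (simp add: L1)
    qed
    have exp: "(\<Sum>m\<in>UNIV. \<Sum>j\<in>UNIV. a m * a j * Weyl g p j k l m)
       = (\<Sum>m\<in>UNIV. \<Sum>j\<in>UNIV. a m * a j * Riem g p j k l m)
         + (1/2) * ((\<Sum>m\<in>UNIV. \<Sum>j\<in>UNIV. a m * a j * (g p m j * Ric g p k l))
                  - (\<Sum>m\<in>UNIV. \<Sum>j\<in>UNIV. a m * a j * (g p m k * Ric g p j l))
                  + (\<Sum>m\<in>UNIV. \<Sum>j\<in>UNIV. a m * a j * (Ric g p m j * g p k l))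
                  - (\<Sum>m\<in>UNIV. \<Sum>j\<in>UNIV. a m * a j * (Ric g p m k * g p j l)))
         - ?s / 6 * ((\<Sum>m\<in>UNIV. \<Sum>j\<in>UNIV. a m * a j * (g p m j * g p k l))
                  - (\<Sum>m\<in>UNIV. \<Sum>j\<in>UNIV. a m * a j * (g p m k * g p j l)))"
      unfolding Weyl_def
      by (simp add: sum.distrib sum_subtractf sum_distrib_left algebra_simps)
    show ?thesis using z exp t1 t2 t3 t4 t5 t6 by (simp add: algebra_simps)
  qed
  have part1': "(\<Sum>m\<in>UNIV. \<Sum>j\<in>UNIV. Riem g p k j l m * a m * a j)
              = - ((lam - scal g p / 6) * A p k * A p l)" for k l
    using part1[of k l] by (simp add: mult_ac Riem_anti[of g p k] sum_negf)
  have P2: "A p q * (\<Sum>m\<in>UNIV. \<Sum>j\<in>UNIV. Riem g p k j l m * a m * a j)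
                 - A p k * (\<Sum>m\<in>UNIV. \<Sum>j\<in>UNIV. Riem g p q j l m * a m * a j) = 0" for q k l
    unfolding part1' by (simp add: algebra_simps)
  show ?thesis
    unfolding a_def[symmetric] using part1 P2 by blast
qed

end
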